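(* Let $\beta>1$ and let $\mathcal{T}$ be a spanning tree of the ladder in the support of $\mathbb{P}$. Let $e=\{(i,h-1),(i,h)\}$ be a horizontal edge of the ray such that the other horizontal edge $\{(1-i,h-1),(1-i,h)\}$ is not in $\mathcal{T}$. Let $Y$ be the walk on the ray (the walk $X$ observed at its times on the ray) started at $(i,h)$. Then $$P^{\mathcal{T}}_{(i,h)}\big[Y_k\ne(i,h-1)\text{ for all }k\ge1\big]\ \ge\ \frac{\beta-1}{2\beta}.$$
   Context: Ladder graph: vertex set $\{0,1\}\times\mathbb{Z}$, vertical edges $z_k=\{(0,k),(1,k)\}$, horizontal edges joining $(i,k-1)$ and $(i,k)$. $\mathbb{P}$ is the law of the random spanning tree of the ladder obtained as the limit of weighted spanning tree measures on finite ladders (weight $c>0$ per vertical edge, $1$ per horizontal edge); a.s. it contains a unique bi-infinite self-avoiding path (the ray). Conductances: $z_k$ and the horizontal edges joining $(i,k-1),(i,k)$ have conductance $\beta^k$. $X$ is the random walk on $\mathcal{T}$ jumping to neighbors with probability proportional to conductances; the walk on the ray $Y$ jumps between ray neighbors with probabilities proportional to the conductances of the ray edges. *)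

theory Defs
  imports Complex_Main
begin

type_synonym vert = "nat \<times> int"

definition ladder_V :: "vert set" where
  "ladder_V = {v. fst v \<le> 1}"

definition ladder_E :: "vert set set" where
  "ladder_E = {{(0,k),(1,k)} | k. True} \<union> {{(i,k-1),(i,k)} | i k. i \<le> 1}"

definition vertical_edge :: "vert set \<Rightarrow> bool" where
  "vertical_edge e \<longleftrightarrow> (\<exists>k. e = {(0,k),(1,k)})"

definition adj_rel :: "vert set set \<Rightarrow> (vert \<times> vert) set" where
  "adj_rel t = {(x,y). {x,y} \<in> t}"

definition is_path :: "vert set set \<Rightarrow> vert list \<Rightarrow> bool" where
  "is_path t xs \<longleftrightarrow> (\<forall>j. Suc j < length xs \<longrightarrow> {xs!j, xs!Suc j} \<in> t)"

definition has_cycle :: "vert set set \<Rightarrow> bool" where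
  "has_cycle t \<longleftrightarrow> (\<exists>xs. length xs \<ge> 3 \<and> distinct xs \<and> is_path t xs \<and> {last xs, hd xs} \<in> t)"

definition spanning_tree :: "vert set \<Rightarrow> vert set set \<Rightarrow> vert set set \<Rightarrow> bool" where
  "spanning_tree V E t \<longleftrightarrow> t \<subseteq> E \<and> (\<forall>u\<in>V. \<forall>v\<in>V. (u,v) \<in> (adj_rel t)\<^sup>*) \<and> \<not> has_cycle t"

definition fin_V :: "nat \<Rightarrow> vert set" where
  "fin_V n = {v \<in> ladder_V. \<bar>snd v\<bar> \<le> int n}"

definition fin_E :: "nat \<Rightarrow> vert set set" where
  "fin_E n = {e \<in> ladder_E. e \<subseteq> fin_V n}"

definition fin_ST :: "nat \<Rightarrow> vert set set set" where
  "fin_ST n = {t. spanning_tree (fin_V n) (fin_E n) t}"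

definition tree_weight :: "real \<Rightarrow> vert set set \<Rightarrow> real" where
  "tree_weight c t = c ^ card {e \<in> t. vertical_edge e}"

text \<open>probability, under the weighted spanning tree measure of the finite ladder
  with levels -n..n, that the tree restricted to W equals S\<close>
definition cyl_prob :: "real \<Rightarrow> nat \<Rightarrow> vert set set \<Rightarrow> vert set set \<Rightarrow> real" where
  "cyl_prob c n W S =
     (\<Sum>t\<in>fin_ST n. if t \<inter> W = S then tree_weight c t else 0) / (\<Sum>t\<in>fin_ST n. tree_weight c t)"

text \<open>T lies in the (topological) support of the limit measure P: every cylinder
  set around T has positive limiting probability\<close>
definition in_support_P :: "real \<Rightarrow> vert set set \<Rightarrow> bool" where
  "in_support_P c T \<longleftrightarrow> T \<subseteq> ladder_E \<and>
     (\<forall>W. finite W \<and> W \<subseteq> ladder_E \<longrightarrow> (\<exists>p>0. (\<lambda>n. cyl_prob c n W (T \<inter> W)) \<longlonglongrightarrow> p))"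

definition biinf_path :: "vert set set \<Rightarrow> (int \<Rightarrow> vert) \<Rightarrow> bool" where
  "biinf_path T r \<longleftrightarrow> inj r \<and> (\<forall>n. {r n, r (n+1)} \<in> T)"

text \<open>R is the vertex set of the unique bi-infinite self-avoiding path of T\<close>
definition is_ray :: "vert set set \<Rightarrow> vert set \<Rightarrow> bool" where
  "is_ray T R \<longleftrightarrow> (\<exists>r. biinf_path T r \<and> range r = R) \<and> (\<forall>r. biinf_path T r \<longrightarrow> range r = R)"

definition ray_edge :: "vert set set \<Rightarrow> vert set \<Rightarrow> vert set \<Rightarrow> bool" where
  "ray_edge T R e \<longleftrightarrow> (\<exists>r n. biinf_path T r \<and> range r = R \<and> {r n, r (n+1)} = e)"

text \<open>z_k and the horizontal edges joining level k-1 and k have conductance beta^k\<close>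
definition cond :: "real \<Rightarrow> vert \<Rightarrow> vert \<Rightarrow> real" where
  "cond \<beta> u v = \<beta> powr real_of_int (max (snd u) (snd v))"

definition ray_nbrs :: "vert set set \<Rightarrow> vert set \<Rightarrow> vert \<Rightarrow> vert set" where
  "ray_nbrs T R x = {y \<in> R. {x,y} \<in> T}"

definition ray_step :: "real \<Rightarrow> vert set set \<Rightarrow> vert set \<Rightarrow> vert \<Rightarrow> vert \<Rightarrow> real" where
  "ray_step \<beta> T R x y = cond \<beta> x y / (\<Sum>y'\<in>ray_nbrs T R x. cond \<beta> x y')"

text \<open>avoid_prob beta T R a n x = P_x[Y_k \<noteq> a for k = 1..n]\<close>
primrec avoid_prob :: "real \<Rightarrow> vert set set \<Rightarrow> vert set \<Rightarrow> vert \<Rightarrow> nat \<Rightarrow> vert \<Rightarrow> real" where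
  "avoid_prob \<beta> T R a 0 x = 1"
| "avoid_prob \<beta> T R a (Suc n) x =
     (\<Sum>y\<in>ray_nbrs T R x. ray_step \<beta> T R x y * (if y = a then 0 else avoid_prob \<beta> T R a n y))"

text \<open>P_x[Y_k \<noteq> a for all k \<ge> 1] (limit of the decreasing sequence above)\<close>
definition escape_prob :: "real \<Rightarrow> vert set set \<Rightarrow> vert set \<Rightarrow> vert \<Rightarrow> vert \<Rightarrow> real" where
  "escape_prob \<beta> T R a x = (INF n. avoid_prob \<beta> T R a n x)"

end

theory Submission imports Defs begin
lemma chord_cycle:
  assumes bp: "biinf_path T r" and ab: "a + 2 \<le> b" and ed: "{r a, r b} \<in> T"
  shows "has_cycle T"
proof -
  define xs where "xs = map (\<lambda>j. r (a + int j)) [0..<nat (b-a)+1]"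
  have len: "length xs = nat (b-a) + 1" by (simp add: xs_def)
  have inj: "inj r" using bp by (simp add: biinf_path_def)
  have "distinct xs" unfolding xs_def
    by (auto simp: distinct_map inj_on_def inj_eq[OF inj] simp del: upt_Suc)
  moreover have "is_path T xs" unfolding is_path_def
  proof (intro allI impI)
    fix j assume "Suc j < length xs"
    hence "xs!j = r (a + int j)" "xs!Suc j = r (a + int j + 1)"
      by (simp_all add: xs_def len del: upt_Suc add: ac_simps)
    thus "{xs!j, xs!Suc j} \<in> T" using bp by (simp add: biinf_path_def)
  qed
  moreover have "hd xs = r a" by (simp add: xs_def hd_map del: upt_Suc)
  moreover have "last xs = r b" using ab by (simp add: xs_def last_map del: upt_Suc)
  ultimately show ?thesis unfolding has_cycle_def using len ab ed
    by (intro exI[of _ xs]) (auto simp: insert_commute)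
qed
lemma ladder_edge:
  assumes "{x,y} \<in> ladder_E"
  shows "fst x \<le> 1 \<and> fst y \<le> 1 \<and> x \<noteq> y \<and> (snd x = snd y \<or> (fst x = fst y \<and> (snd y = snd x + 1 \<or> snd y = snd x - 1)))"
  using assms unfolding ladder_E_def
  by (auto simp: doubleton_eq_iff)

lemma nbrs:
  assumes bp: "biinf_path T r" and rng: "range r = R" and TE: "T \<subseteq> ladder_E"
    and nc: "\<not> has_cycle T"
  shows "ray_nbrs T R (r m) = {r (m-1), r (m+1)}"
proof
  show "{r (m-1), r (m+1)} \<subseteq> ray_nbrs T R (r m)"
    using bp rng unfolding ray_nbrs_def biinf_path_def
    by (auto simp: insert_commute) (metis diff_add_cancel insert_commute)
next
  show "ray_nbrs T R (r m) \<subseteq> {r (m-1), r (m+1)}"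
  proof
    fix y assume "y \<in> ray_nbrs T R (r m)"
    then obtain k where y: "y = r k" and ed: "{r m, r k} \<in> T"
      using rng unfolding ray_nbrs_def by auto
    have "r m \<noteq> r k" using ladder_edge ed TE by blast
    hence "k \<noteq> m" by auto
    moreover have "\<not> m + 2 \<le> k" using chord_cycle[OF bp _ ed] nc by blast
    moreover have "\<not> k + 2 \<le> m" using chord_cycle[OF bp, of k m] ed nc by (auto simp: insert_commute)
    ultimately have "k = m - 1 \<or> k = m + 1" by linarith
    thus "y \<in> {r (m-1), r (m+1)}" using y by auto
  qed
qed

lemma avoid_nonneg:
  assumes "\<beta> > 1"
  shows "avoid_prob \<beta> T R a n x \<ge> 0"
proof (induction n arbitrary: x)
  case 0 thus ?case by simp
next
  case (Suc n)
  have "ray_step \<beta> T R x y \<ge> 0" for y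
    unfolding ray_step_def cond_def using assms
    by (intro divide_nonneg_nonneg sum_nonneg) auto
  thus ?case using Suc by (auto intro!: sum_nonneg mult_nonneg_nonneg)
qed

lemma levels_ge:
  assumes bp: "biinf_path T r" and TE: "T \<subseteq> ladder_E"
    and a: "r (n0-1) = (i,h-1)" and b: "r n0 = (i,h)" and i: "i \<le> 1"
    and no: "{(1-i,h-1),(1-i,h)} \<notin> T"
  shows "snd (r (n0 + int k)) \<ge> h"
proof (induction k)
  case 0 thus ?case using b by simp
next
  case (Suc k)
  show ?case
  proof (rule ccontr)
    assume "\<not> ?thesis"
    hence lt: "snd (r (n0 + int k + 1)) < h" by (simp add: ac_simps)
    have ed: "{r (n0 + int k), r (n0 + int k + 1)} \<in> T" using bp by (simp add: biinf_path_def)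
    with TE have E: "{r (n0 + int k), r (n0 + int k + 1)} \<in> ladder_E" by blast
    note L = ladder_edge[OF E]
    obtain c where c1: "fst (r (n0 + int k)) = c" "fst (r (n0 + int k + 1)) = c"
      and l: "snd (r (n0 + int k)) = h" "snd (r (n0 + int k + 1)) = h - 1"
      using L Suc.IH lt by auto
    have c: "c \<le> 1" using L c1 by simp
    have rr: "r (n0 + int k) = (c,h)" "r (n0 + int k + 1) = (c,h-1)"
      using c1 l by (metis prod.collapse)+
    show False
    proof (cases "c = i")
      case True
      hence "r (n0 + int k + 1) = r (n0 - 1)" using rr a by simp
      hence "n0 + int k + 1 = n0 - 1" using bp by (simp add: biinf_path_def inj_eq)
      thus False by simp
    next
      case False
      hence "c = 1 - i" using c i by linarith
      thus False using ed rr no by (simp add: insert_commute)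
    qed
  qed
qed


lemma geom_int:
  assumes "\<beta> > 1" and "M \<ge> h - 1"
  shows "(\<Sum>l\<in>{h..M}. \<beta> powr (- real_of_int l)) = (\<beta> powr (1 - real_of_int h) - \<beta> powr (- real_of_int M)) / (\<beta> - 1)"
  using assms(2)
proof (induction M rule: int_ge_induct)
  case base thus ?case by simp
next
  case (step M)
  define y where "y = \<beta> powr (- real_of_int M)"
  have "{h..M+1} = insert (M+1) {h..M}" using step.hyps by auto
  hence e1: "(\<Sum>l\<in>{h..M+1}. \<beta> powr (- real_of_int l)) = \<beta> powr (- real_of_int (M+1)) + (\<Sum>l\<in>{h..M}. \<beta> powr (- real_of_int l))"
    using step.hyps by simp
  have e2: "\<beta> powr (- real_of_int (M+1)) = y / \<beta>"
    using assms(1) unfolding y_def by (simp add: powr_diff powr_minus divide_simps powr_add)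
  show ?case unfolding e1 e2 step.IH y_def[symmetric] using assms(1)
    by (simp add: divide_simps) (simp add: algebra_simps)
qed

lemma sum_levels_bound:
  fixes V :: "vert set"
  assumes "\<beta> > 1" and V: "V \<subseteq> {0,1} \<times> {h..M}"
  shows "(\<Sum>v\<in>V. \<beta> powr (- real_of_int (snd v))) \<le> 2 * \<beta> powr (1 - real_of_int h) / (\<beta> - 1)"
proof -
  have fin: "finite ({0,1::nat} \<times> {h..M})" by simp
  have "(\<Sum>v\<in>V. \<beta> powr (- real_of_int (snd v))) \<le> (\<Sum>v\<in>{0,1::nat} \<times> {h..M}. \<beta> powr (- real_of_int (snd v)))"
    by (rule sum_mono2[OF fin V]) simp
  also have "\<dots> = 2 * (\<Sum>l\<in>{h..M}. \<beta> powr (- real_of_int l))"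
  proof -
    have "(\<Sum>v\<in>{0,1::nat} \<times> {h..M}. \<beta> powr (- real_of_int (snd v)))
       = (\<Sum>(c,l)\<in>{0,1::nat} \<times> {h..M}. \<beta> powr (- real_of_int l))" by (simp add: split_def)
    also have "\<dots> = (\<Sum>c\<in>{0,1::nat}. \<Sum>l\<in>{h..M}. \<beta> powr (- real_of_int l))"
      by (rule sum.cartesian_product[symmetric])
    finally show ?thesis by simp
  qed
  also have "\<dots> \<le> 2 * \<beta> powr (1 - real_of_int h) / (\<beta> - 1)"
  proof (cases "M \<ge> h - 1")
    case True
    show ?thesis unfolding geom_int[OF assms(1) True] using assms(1)
      by (simp add: divide_right_mono)
  next
    case False
    hence "{h..M} = {}" by auto
    thus ?thesis using assms(1) by simp
  qed
  finally show ?thesis .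
qed


lemma harm:
  fixes x y s K :: real
  assumes "x > 0" "y > 0" "K > 0"
  shows "s / K = x / (x + y) * ((s - 1 / x) / K) + y / (x + y) * ((s + 1 / y) / K)"
proof -
  have a1: "x*(s-1/x) = x*s-1" using assms by (simp add: right_diff_distrib)
  have a2: "y*(s+1/y) = y*s+1" using assms by (simp add: distrib_left)
  have 1: "x / (x + y) * ((s - 1 / x) / K) = (x*s - 1) / ((x+y)*K)" unfolding a1[symmetric] by simp
  have 2: "y / (x + y) * ((s + 1 / y) / K) = (y*s + 1) / ((x+y)*K)" unfolding a2[symmetric] by simp
  have "(x*s - 1) / ((x+y)*K) + (y*s + 1) / ((x+y)*K) = ((x+y)*s) / ((x+y)*K)"
    by (simp add: add_divide_distrib[symmetric] algebra_simps)
  also have "\<dots> = s / K" using assms by simp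
  finally have X: "(x*s - 1) / ((x+y)*K) + (y*s + 1) / ((x+y)*K) = s / K" .
  show ?thesis unfolding 1 2 by (rule X[symmetric])
qed

lemma core:
  assumes beta: "\<beta> > 1" and TE: "T \<subseteq> ladder_E" and nc: "\<not> has_cycle T"
    and bp: "biinf_path T r" and rng: "range r = R"
    and a: "r (n0-1) = (i,h-1)" and b: "r n0 = (i,h)" and i: "i \<le> 1"
    and no: "{(1-i,h-1),(1-i,h)} \<notin> T"
  shows "(\<beta> - 1) / (2 * \<beta>) \<le> escape_prob \<beta> T R (i,h-1) (i,h)"
proof -
  have inj: "inj r" using bp by (simp add: biinf_path_def)
  define c where "c j = cond \<beta> (r j) (r (j+1))" for j
  define K where "K = 2 * \<beta> powr (1 - real_of_int h) / (\<beta> - 1)"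
  define S where "S m = (\<Sum>j\<in>{n0-1..<m}. 1 / c j)" for m
  define g where "g m = (if m \<ge> n0-1 then S m / K else 0)" for m
  have cpos: "c j > 0" for j using beta by (simp add: c_def cond_def)
  have Kpos: "K > 0" using beta by (simp add: K_def)
  have condsym: "cond \<beta> x y = cond \<beta> y x" for x y by (simp add: cond_def max.commute)
  have lev: "snd (r j) \<ge> h" if "j \<ge> n0" for j
    using levels_ge[OF bp TE a b i no, of "nat (j - n0)"] that by simp
  have cbound: "1 / c j \<le> \<beta> powr (- real_of_int (snd (r (j+1))))" for j
  proof -
    have "\<beta> powr real_of_int (snd (r (j+1))) \<le> c j"
      unfolding c_def cond_def using beta by simp
    hence "1 / c j \<le> 1 / \<beta> powr real_of_int (snd (r (j+1)))"
      using beta cpos[of j] by (intro divide_left_mono) auto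
    thus ?thesis by (simp add: powr_minus_divide)
  qed
  have Sle: "S m \<le> K" for m
  proof (cases "m \<ge> n0")
    case False
    hence "{n0-1..<m} = {}" by auto
    thus ?thesis using Kpos by (simp add: S_def)
  next
    case True
    have "S m \<le> (\<Sum>j\<in>{n0-1..<m}. \<beta> powr (- real_of_int (snd (r (j+1)))))"
      unfolding S_def by (rule sum_mono) (rule cbound)
    also have "\<dots> = (\<Sum>j\<in>{n0..m}. \<beta> powr (- real_of_int (snd (r j))))"
    proof -
      have eq: "{n0..m} = (\<lambda>j. j+1) ` {n0-1..<m}" by (auto simp: image_iff intro!: bexI[of _ "_ - 1"])
      show ?thesis unfolding eq by (subst sum.reindex) (auto simp: inj_on_def)
    qed
    also have "\<dots> = (\<Sum>v\<in>r ` {n0..m}. \<beta> powr (- real_of_int (snd v)))"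
      by (subst sum.reindex) (auto intro: inj_on_subset[OF inj])
    also have "\<dots> \<le> K"
    proof -
      define M where "M = Max (snd ` r ` {n0..m})"
      have "r ` {n0..m} \<subseteq> {0,1} \<times> {h..M}"
      proof
        fix v assume "v \<in> r ` {n0..m}"
        then obtain j where j: "j \<in> {n0..m}" "v = r j" by auto
        have "{r j, r (j+1)} \<in> ladder_E" using bp TE by (auto simp: biinf_path_def)
        hence "fst v \<le> 1" using ladder_edge j by blast
        moreover have "snd v \<ge> h" using lev j by auto
        moreover have "snd v \<le> M" unfolding M_def using j by (intro Max_ge) auto
        ultimately show "v \<in> {0,1} \<times> {h..M}" by (cases v) auto
      qed
      thus ?thesis unfolding K_def by (rule sum_levels_bound[OF beta])
    qed
    finally show ?thesis .
  qed
  have Snn: "S m \<ge> 0" for m unfolding S_def using cpos by (intro sum_nonneg) (simp add: less_imp_le)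
  have Sdown: "S (m-1) = S m - 1 / c (m-1)" if "m \<ge> n0" for m
  proof -
    have "{n0-1..<m} = insert (m-1) {n0-1..<m-1}" using that by auto
    thus ?thesis unfolding S_def by simp
  qed
  have Sup: "S (m+1) = S m + 1 / c m" if "m \<ge> n0" for m
    using Sdown[of "m+1"] that by simp
  let ?A = "avoid_prob \<beta> T R (i,h-1)"
  have main: "\<forall>m. g m \<le> ?A n (r m)" for n
  proof (induction n)
    case 0
    show ?case using Sle Kpos by (simp add: g_def)
  next
    case (Suc n)
    show ?case
    proof
      fix m
      show "g m \<le> ?A (Suc n) (r m)"
      proof (cases "m \<ge> n0")
        case False
        hence "g m \<le> 0"
        proof (cases "m = n0 - 1")
          case True thus ?thesis by (simp add: g_def S_def)
        qed (use False in \<open>simp add: g_def\<close>)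
        thus ?thesis using avoid_nonneg[OF beta] by (rule order_trans)
      next
        case True
        have N: "ray_nbrs T R (r m) = {r (m-1), r (m+1)}" by (rule nbrs[OF bp rng TE nc])
        have d: "r (m-1) \<noteq> r (m+1)" using inj by (simp add: inj_eq)
        have up: "r (m+1) \<noteq> (i,h-1)" using injD[OF inj, of "m+1" "n0-1"] True a by auto
        have c1: "cond \<beta> (r m) (r (m-1)) = c (m-1)" by (simp add: c_def condsym)
        have c2: "cond \<beta> (r m) (r (m+1)) = c m" by (simp add: c_def)
        define D where "D = c (m-1) + c m"
        have Dpos: "D > 0" using cpos by (simp add: D_def add_pos_pos)
        have st1: "ray_step \<beta> T R (r m) (r (m-1)) = c (m-1) / D"
          unfolding ray_step_def N using d c1 c2 by (simp add: D_def)
        have st2: "ray_step \<beta> T R (r m) (r (m+1)) = c m / D"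
          unfolding ray_step_def N using d c1 c2 by (simp add: D_def)
        have A: "?A (Suc n) (r m) = c (m-1) / D * (if r (m-1) = (i,h-1) then 0 else ?A n (r (m-1)))
                 + c m / D * ?A n (r (m+1))"
          using d up by (simp add: N st1 st2)
        have t1: "c (m-1) / D * g (m-1) \<le> c (m-1) / D * (if r (m-1) = (i,h-1) then 0 else ?A n (r (m-1)))"
        proof (cases "m = n0")
          case True
          thus ?thesis using a by (simp add: g_def S_def)
        next
          case False
          hence "r (m-1) \<noteq> (i,h-1)" using injD[OF inj, of "m-1" "n0-1"] a False by auto
          moreover have "c (m-1) / D \<ge> 0" using cpos[of "m-1"] Dpos by simp
          ultimately show ?thesis using Suc.IH by (simp add: mult_left_mono del: times_divide_eq_left)
        qed
        have t2: "c m / D * g (m+1) \<le> c m / D * ?A n (r (m+1))"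
          using Suc.IH cpos[of m] Dpos by (intro mult_left_mono) auto
        have "g m = c (m-1) / D * g (m-1) + c m / D * g (m+1)"
        proof -
          have "g m = S m / K" "g (m-1) = (S m - 1 / c (m-1)) / K" "g (m+1) = (S m + 1 / c m) / K"
            using True Sdown Sup by (auto simp: g_def)
          moreover have "c (m-1) > 0" "c m > 0" using cpos by auto
          ultimately show ?thesis using Kpos unfolding D_def by (simp only:) (rule harm)
        qed
        thus ?thesis using A t1 t2 by linarith
      qed
    qed
  qed
  have "g n0 \<le> escape_prob \<beta> T R (i,h-1) (i,h)"
    unfolding escape_prob_def
  proof (intro cINF_greatest)
    fix n show "g n0 \<le> ?A n (i,h)" using main[of n] b by metis
  qed simp
  moreover have "g n0 = (\<beta> - 1) / (2 * \<beta>)"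
  proof -
    define P where "P = \<beta> powr real_of_int h"
    have Ppos: "P > 0" using beta by (simp add: P_def)
    have "S n0 = 1 / c (n0-1)" using Sdown[of n0] by (simp add: S_def)
    moreover have "c (n0-1) = P" using a b by (simp add: c_def cond_def P_def)
    moreover have "\<beta> powr (1 - real_of_int h) = \<beta> / P"
      using beta by (simp add: powr_diff P_def)
    ultimately have "g n0 = (1/P) / (2 * (\<beta> / P) / (\<beta> - 1))" by (simp add: g_def K_def)
    also have "\<dots> = (\<beta> - 1) / (2 * \<beta>)" using Ppos beta by (simp add: divide_simps)
    finally show ?thesis .
  qed
  ultimately show ?thesis by simp
qed


theorem mainTheorem10:
  fixes \<beta> c :: real and T :: "vert set set" and R :: "vert set" and i :: nat and h :: int
  assumes "\<beta> > 1" and "c > 0"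
    and "spanning_tree ladder_V ladder_E T"
    and "in_support_P c T"
    and "is_ray T R"
    and "i \<le> 1"
    and "ray_edge T R {(i,h-1),(i,h)}"
    and "{(1-i,h-1),(1-i,h)} \<notin> T"
  shows "escape_prob \<beta> T R (i,h-1) (i,h) \<ge> (\<beta> - 1) / (2 * \<beta>)"
proof -
  have TE: "T \<subseteq> ladder_E" and nc: "\<not> has_cycle T"
    using assms(3) by (auto simp: spanning_tree_def)
  obtain r n where bp: "biinf_path T r" and rng: "range r = R"
    and e: "{r n, r (n+1)} = {(i,h-1),(i,h)}"
    using assms(7) unfolding ray_edge_def by blast
  from e have "(r n = (i,h-1) \<and> r (n+1) = (i,h)) \<or> (r n = (i,h) \<and> r (n+1) = (i,h-1))"
    by (auto simp: doubleton_eq_iff)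
  thus ?thesis
  proof
    assume H: "r n = (i,h-1) \<and> r (n+1) = (i,h)"
    show ?thesis
      by (rule core[OF assms(1) TE nc bp rng _ _ assms(6) assms(8), of "n+1"]) (use H in simp_all)
  next
    assume H: "r n = (i,h) \<and> r (n+1) = (i,h-1)"
    define r' where "r' k = r (- k)" for k
    have bp': "biinf_path T r'"
      using bp unfolding biinf_path_def r'_def
    proof (intro conjI allI)
      show "inj (\<lambda>k. r (- k))" using bp unfolding biinf_path_def inj_def by (metis minus_minus)
      fix k :: int
      have "{r (-k-1), r (-k-1+1)} \<in> T" using bp unfolding biinf_path_def by blast
      hence "{r (-k-1), r (-k)} \<in> T" by simp
      thus "{r (- k), r (- (k + 1))} \<in> T" by (simp add: insert_commute)
    qed
    have rng': "range r' = R"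
    proof -
      have "range r' = range r" unfolding r'_def
        by (auto simp: image_iff) (metis minus_minus)
      thus ?thesis using rng by simp
    qed
    show ?thesis
      by (rule core[OF assms(1) TE nc bp' rng' _ _ assms(6) assms(8), of "-n"]) (use H in \<open>simp_all add: r'_def add.commute\<close>)
  qed
qed

end
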